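(* For every integer $r\ge 0$: \begin{align*} \mathrm{LCD}[6r+3,2] &< 4r+3,\\ \mathrm{LCD}[6r+4,2] &< 4r+3,\\ \mathrm{LCD}[6r+7,2] &< 4r+5,\\ \mathrm{LCD}[6r+8,2] &< 4r+6. \end{align*}
   Context: All codes are binary linear codes, i.e. subspaces of $\mathbb{F}_2^n$; an $[n,k,d]$ code is one of length $n$, dimension $k$ and minimum Hamming distance $d$. A linear code $C$ is an LCD code if $C\cap C^\perp=\{0\}$, where $C^\perp$ is the dual with respect to the standard dot product. For positive integers $n\ge k$, $\mathrm{LCD}[n,k]$ denotes the largest $d$ such that there exists a binary $[n,k,d]$ LCD code. *)

theory Defs
  imports Main
begin

text \<open>Vectors of F_2^n are represented as functions nat => bool (True = 1)
  vanishing outside the index set {0..<n}. Addition over F_2 is XOR.\<close>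

definition F2vecs :: "nat \<Rightarrow> (nat \<Rightarrow> bool) set" where
  "F2vecs n = {x. \<forall>i\<ge>n. \<not> x i}"

definition vzero :: "nat \<Rightarrow> bool" where
  "vzero = (\<lambda>i. False)"

definition vadd :: "(nat \<Rightarrow> bool) \<Rightarrow> (nat \<Rightarrow> bool) \<Rightarrow> (nat \<Rightarrow> bool)" where
  "vadd x y = (\<lambda>i. x i \<noteq> y i)"

definition dot_zero :: "nat \<Rightarrow> (nat \<Rightarrow> bool) \<Rightarrow> (nat \<Rightarrow> bool) \<Rightarrow> bool" where
  "dot_zero n x y \<longleftrightarrow> even (card {i. i < n \<and> x i \<and> y i})"

definition hamming_dist :: "nat \<Rightarrow> (nat \<Rightarrow> bool) \<Rightarrow> (nat \<Rightarrow> bool) \<Rightarrow> nat" where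
  "hamming_dist n x y = card {i. i < n \<and> x i \<noteq> y i}"

text \<open>A binary linear code of length n: an F_2-subspace of F_2^n
  (scalar multiplication over F_2 is trivial, so: contains 0 and closed under +).\<close>
definition linear_code :: "nat \<Rightarrow> (nat \<Rightarrow> bool) set \<Rightarrow> bool" where
  "linear_code n C \<longleftrightarrow> C \<subseteq> F2vecs n \<and> vzero \<in> C \<and> (\<forall>x\<in>C. \<forall>y\<in>C. vadd x y \<in> C)"

text \<open>An F_2-subspace has dimension k iff it has exactly 2^k elements.\<close>
definition code_dim :: "(nat \<Rightarrow> bool) set \<Rightarrow> nat \<Rightarrow> bool" where
  "code_dim C k \<longleftrightarrow> card C = 2 ^ k"

definition min_dist :: "nat \<Rightarrow> (nat \<Rightarrow> bool) set \<Rightarrow> nat" where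
  "min_dist n C = Min {hamming_dist n x y | x y. x \<in> C \<and> y \<in> C \<and> x \<noteq> y}"

definition dual_code :: "nat \<Rightarrow> (nat \<Rightarrow> bool) set \<Rightarrow> (nat \<Rightarrow> bool) set" where
  "dual_code n C = {y \<in> F2vecs n. \<forall>x\<in>C. dot_zero n x y}"

definition is_LCD :: "nat \<Rightarrow> (nat \<Rightarrow> bool) set \<Rightarrow> bool" where
  "is_LCD n C \<longleftrightarrow> C \<inter> dual_code n C = {vzero}"

definition LCD_code :: "nat \<Rightarrow> nat \<Rightarrow> nat \<Rightarrow> (nat \<Rightarrow> bool) set \<Rightarrow> bool" where
  "LCD_code n k d C \<longleftrightarrow> linear_code n C \<and> code_dim C k \<and> min_dist n C = d \<and> is_LCD n C"

definition LCD :: "nat \<Rightarrow> nat \<Rightarrow> nat" where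
  "LCD n k = Max {d. \<exists>C. LCD_code n k d C}"

end

theory Submission
  imports Defs
begin

lemma card_less_Suc:
  "card {i. i < Suc n \<and> P i} = card {i. i < n \<and> P i} + (if P n then 1 else 0)"
proof (cases "P n")
  case True
  have "{i. i < Suc n \<and> P i} = insert n {i. i < n \<and> P i}" using True by auto
  then show ?thesis using True by simp
next
  case False
  have "{i. i < Suc n \<and> P i} = {i. i < n \<and> P i}" using False less_Suc_eq by auto
  then show ?thesis using False by simp
qed

lemma aux: "(A::nat) + B + C \<le> 2 * n \<Longrightarrow> a + b + c \<le> 2 \<Longrightarrow> A + a + (B + b) + (C + c) \<le> 2 * Suc n"
  by simp

lemma triple:
  "hamming_dist n x y + hamming_dist n y w + hamming_dist n x w \<le> 2 * n"
proof (induction n)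
  case 0
  then show ?case by (simp add: hamming_dist_def)
next
  case (Suc n)
  have h: "(if x n \<noteq> y n then 1 else 0) + (if y n \<noteq> w n then 1 else 0) + (if x n \<noteq> w n then 1 else (0::nat)) \<le> 2"
    by (cases "x n"; cases "y n"; cases "w n") simp_all
  have e1: "hamming_dist (Suc n) x y = hamming_dist n x y + (if x n \<noteq> y n then 1 else 0)"
    unfolding hamming_dist_def by (rule card_less_Suc)
  have e2: "hamming_dist (Suc n) y w = hamming_dist n y w + (if y n \<noteq> w n then 1 else 0)"
    unfolding hamming_dist_def by (rule card_less_Suc)
  have e3: "hamming_dist (Suc n) x w = hamming_dist n x w + (if x n \<noteq> w n then 1 else 0)"
    unfolding hamming_dist_def by (rule card_less_Suc)
  show ?case unfolding e1 e2 e3 by (rule aux[OF Suc.IH h])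
qed

lemma three:
  assumes "card C = (4::nat)"
  obtains x y w where "x \<in> C" "y \<in> C" "w \<in> C" "x \<noteq> y" "y \<noteq> w" "x \<noteq> w"
proof -
  have fin: "finite C" using assms by (metis card.infinite zero_neq_numeral)
  obtain x where x: "x \<in> C" using assms by fastforce
  have c1: "card (C - {x}) = 3" using assms x fin by simp
  have "C - {x} \<noteq> {}" using c1 by (metis card.empty zero_neq_numeral)
  then obtain y where y: "y \<in> C - {x}" by blast
  have c2: "card (C - {x} - {y}) = 2" using c1 y fin by simp
  have "C - {x} - {y} \<noteq> {}" using c2 by (metis card.empty zero_neq_numeral)
  then obtain w where w: "w \<in> C - {x} - {y}" by blast
  show ?thesis using that x y w by blast
qed
lemma bound:
  assumes "linear_code n C" "code_dim C 2"
  shows "3 * min_dist n C \<le> 2 * n"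
proof -
  have c4: "card C = 4" using assms(2) by (simp add: code_dim_def)
  then have fin: "finite C" by (metis card.infinite zero_neq_numeral)
  obtain x y w where xyw: "x \<in> C" "y \<in> C" "w \<in> C" "x \<noteq> y" "y \<noteq> w" "x \<noteq> w"
    using three[OF c4] by blast
  define S where "S = {hamming_dist n x y | x y. x \<in> C \<and> y \<in> C \<and> x \<noteq> y}"
  have "S \<subseteq> (\<lambda>(x,y). hamming_dist n x y) ` (C \<times> C)" unfolding S_def by auto
  then have finS: "finite S" using fin by (meson finite_SigmaI finite_imageI finite_subset)
  have "hamming_dist n x y \<in> S" "hamming_dist n y w \<in> S" "hamming_dist n x w \<in> S"
    unfolding S_def using xyw by blast+
  then have "Min S \<le> hamming_dist n x y" "Min S \<le> hamming_dist n y w"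
    "Min S \<le> hamming_dist n x w"
    using finS by auto
  moreover have "min_dist n C = Min S" unfolding min_dist_def S_def by simp
  ultimately show ?thesis using triple[of n x y w] by linarith
qed

definition vec2 :: "bool \<times> bool \<Rightarrow> nat \<Rightarrow> bool" where
  "vec2 pq = (\<lambda>i. (i = 0 \<and> fst pq) \<or> (i = 1 \<and> snd pq))"

lemma vec2_inj: "inj vec2"
proof (rule injI)
  fix a b assume "vec2 a = vec2 b"
  then have "vec2 a 0 = vec2 b 0" "vec2 a 1 = vec2 b 1" by auto
  then show "a = b" by (cases a; cases b) (simp add: vec2_def)
qed

lemma vec2_add: "vadd (vec2 (p,q)) (vec2 (p',q')) = vec2 (p \<noteq> p', q \<noteq> q')"
  by (auto simp: vadd_def vec2_def fun_eq_iff)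

lemma exists_code:
  assumes "n \<ge> 2"
  shows "\<exists>C. LCD_code n 2 (min_dist n C) C"
proof -
  define C where "C = range vec2"
  have z: "vzero = vec2 (False, False)" by (simp add: vzero_def vec2_def fun_eq_iff)
  have "C \<subseteq> F2vecs n" unfolding C_def F2vecs_def vec2_def using assms by auto
  moreover have "vzero \<in> C" unfolding C_def z by simp
  moreover have "\<forall>x\<in>C. \<forall>y\<in>C. vadd x y \<in> C"
    unfolding C_def by (auto simp: vec2_add)
  ultimately have lin: "linear_code n C" unfolding linear_code_def by blast
  have cC: "card C = card (UNIV :: (bool \<times> bool) set)"
    unfolding C_def by (rule card_image[OF vec2_inj[unfolded inj_on_def, folded inj_on_def]])
  have U: "(UNIV :: (bool \<times> bool) set) = {(False,False),(False,True),(True,False),(True,True)}"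
    by auto
  have dim: "code_dim C 2" unfolding code_dim_def cC U by simp
  have s0: "{i. i < n \<and> vec2 (p,q) i \<and> vec2 (True,False) i} = (if p then {0} else {})" for p q
    using assms by (auto simp: vec2_def)
  have s1: "{i. i < n \<and> vec2 (p,q) i \<and> vec2 (False,True) i} = (if q then {1} else {})" for p q
    using assms by (auto simp: vec2_def)
  have nd: "vec2 (p,q) \<notin> dual_code n C" if "p \<or> q" for p q
  proof
    assume a: "vec2 (p,q) \<in> dual_code n C"
    have "vec2 (True,False) \<in> C" "vec2 (False,True) \<in> C" unfolding C_def by auto
    then have "dot_zero n (vec2 (True,False)) (vec2 (p,q))" "dot_zero n (vec2 (False,True)) (vec2 (p,q))"
      using a unfolding dual_code_def by auto
    then have "dot_zero n (vec2 (p,q)) (vec2 (True,False))" "dot_zero n (vec2 (p,q)) (vec2 (False,True))"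
      unfolding dot_zero_def by (simp_all add: conj_commute conj_left_commute)
    then show False using that unfolding dot_zero_def s0 s1 by auto
  qed
  have "vzero \<in> dual_code n C"
    unfolding dual_code_def F2vecs_def dot_zero_def by (auto simp: vzero_def)
  have "C \<inter> dual_code n C = {vzero}"
  proof
    show "C \<inter> dual_code n C \<subseteq> {vzero}"
    proof
      fix v assume v: "v \<in> C \<inter> dual_code n C"
      then obtain p q where pq: "v = vec2 (p,q)" unfolding C_def by auto
      have "\<not> (p \<or> q)" using nd[of p q] v pq by blast
      then show "v \<in> {vzero}" using pq z by simp
    qed
    show "{vzero} \<subseteq> C \<inter> dual_code n C" using \<open>vzero \<in> C\<close> \<open>vzero \<in> dual_code n C\<close> by blast
  qed
  then have "is_LCD n C" unfolding is_LCD_def by blast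
  then show ?thesis using lin dim unfolding LCD_code_def by blast
qed

lemma LCD_bound:
  assumes "n \<ge> 2" "2 * n < 3 * B"
  shows "LCD n 2 < B"
proof -
  define D where "D = {d. \<exists>C. LCD_code n 2 d C}"
  have sub: "D \<subseteq> {..<B}"
  proof
    fix d assume "d \<in> D"
    then obtain C where "LCD_code n 2 d C" unfolding D_def by blast
    then have "3 * d \<le> 2 * n" using bound unfolding LCD_code_def by blast
    then show "d \<in> {..<B}" using assms by simp
  qed
  have "D \<noteq> {}" using exists_code[OF assms(1)] unfolding D_def by blast
  then have "Max D \<in> D" using sub by (meson Max_in finite_lessThan finite_subset)
  then show ?thesis using sub unfolding LCD_def D_def[symmetric] by auto
qed

theorem proposition2p3:
  fixes r :: nat
  shows "LCD (6*r+3) 2 < 4*r+3 \<and> LCD (6*r+4) 2 < 4*r+3 \<and>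
         LCD (6*r+7) 2 < 4*r+5 \<and> LCD (6*r+8) 2 < 4*r+6"
  by (intro conjI LCD_bound) auto

end
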